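(* Let $r,p,\Delta>0$ be fixed integers and suppose that sequences $\{\xi_{s,t}\}_{s,t\ge0}\subseteq\mathbb{N}$ and $\{k_i\}_{i\ge0}\subseteq\mathbb{N}$ satisfy $$k_{s+t+r}=k_s+k_t+p-\Delta\xi_{s,t}\quad\text{for all } s,t\ge0.$$ Then $\xi_{s,0}=\xi_{0,s}$ for all $s\ge0$, and for all $i\ge0$, $0\le j<r$: $$rk_{ir+j}=((i+1)r+j)k_0+(ir+j)p-\Delta\Big(\tau_j+r\sum_{s=0}^{i-1}\xi_{0,sr+j}\Big),$$ where $$\tau_j=j\xi_{0,0}+j\sum_{s=1}^{r-1}(\xi_{0,s+1}-\xi_{1,s})-r\sum_{s=1}^{j-1}(\xi_{0,s+1}-\xi_{1,s}),\quad 0\le j<r.$$ Moreover, for all $a,c\ge0$ and $0\le b,d<r$: if $b+d<r$, then $$\xi_{ar+b,cr+d}=\sum_{s=1}^{b-1}(\xi_{0,s+1}-\xi_{1,s})+\sum_{s=1}^{d-1}(\xi_{0,s+1}-\xi_{1,s})-\sum_{s=1}^{b+d-1}(\xi_{0,s+1}-\xi_{1,s})+\sum_{s=0}^{a+c}\xi_{0,sr+b+d}-\sum_{s=0}^{a-1}\xi_{0,sr+b}-\sum_{s=0}^{c-1}\xi_{0,sr+d};$$ and if $b+d\ge r$, then $$\xi_{ar+b,cr+d}=\sum_{s=1}^{b-1}(\xi_{0,s+1}-\xi_{1,s})+\sum_{s=1}^{d-1}(\xi_{0,s+1}-\xi_{1,s})-\sum_{s=1}^{b+d-r-1}(\xi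_{0,s+1}-\xi_{1,s})+\sum_{s=0}^{a+c+1}\xi_{0,sr+b+d-r}-\sum_{s=0}^{a-1}\xi_{0,sr+b}-\sum_{s=0}^{c-1}\xi_{0,sr+d}-\xi_{0,0}-\sum_{s=1}^{r-1}(\xi_{0,s+1}-\xi_{1,s}).$$
   Context: $\mathbb{N}$ includes $0$. A sum $\sum_{i=a}^b$ with $b<a$ is zero. *)

theory Defs
  imports Main
begin

definition xdiff :: "(nat \<Rightarrow> nat \<Rightarrow> nat) \<Rightarrow> nat \<Rightarrow> int" where
  "xdiff \<xi> s = int (\<xi> 0 (s+1)) - int (\<xi> 1 s)"

definition tau :: "(nat \<Rightarrow> nat \<Rightarrow> nat) \<Rightarrow> nat \<Rightarrow> nat \<Rightarrow> int" where
  "tau \<xi> r j = int j * int (\<xi> 0 0) + int j * (\<Sum>s\<in>{1..<r}. xdiff \<xi> s)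
     - int r * (\<Sum>s\<in>{1..<j}. xdiff \<xi> s)"

end

theory Submission
  imports Defs
begin

lemma P2:
  fixes r :: nat and p \<Delta> :: int
    and \<xi> :: "nat \<Rightarrow> nat \<Rightarrow> nat" and k :: "nat \<Rightarrow> nat"
  assumes "r > 0" and "\<Delta> > 0"
    and rec: "\<And>s t. int (k (s + t + r)) = int (k s) + int (k t) + p - \<Delta> * int (\<xi> s t)"
  shows "int r * int (k (i * r + j)) =
            int ((i + 1) * r + j) * int (k 0) + int (i * r + j) * p
            - \<Delta> * (tau \<xi> r j + int r * (\<Sum>s<i. int (\<xi> 0 (s * r + j))))"
proof -
  have sym: "\<xi> s t = \<xi> t s" for s t
  proof -
    have "\<Delta> * int (\<xi> s t) = \<Delta> * int (\<xi> t s)"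
      using rec[of s t] rec[of t s] by (simp add: add.commute)
    thus ?thesis using assms(2) by simp
  qed
  define c where "c = int (k 1) - int (k 0)"
  have L1: "int (k (t+1)) = int (k t) + c + \<Delta> * xdiff \<xi> t" for t
    using rec[of 1 t] rec[of "t+1" 0] sym[of 1 t] sym[of "t+1" 0]
    unfolding c_def xdiff_def by (simp add: algebra_simps)
  have x0: "xdiff \<xi> 0 = 0" using sym[of 1 0] by (simp add: xdiff_def)
  have L2a: "int (k j) = int (k 0) + int j * c + \<Delta> * (\<Sum>t<j. xdiff \<xi> t)" for j
  proof (induction j)
    case (Suc j) show ?case using L1[of j] Suc by (simp add: algebra_simps)
  qed simp
  have sh: "(\<Sum>t<j. xdiff \<xi> t) = (\<Sum>t\<in>{1..<j}. xdiff \<xi> t)" for j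
  proof (cases j)
    case 0 then show ?thesis by simp
  next
    case (Suc m)
    have "{..<j} = insert 0 {1..<j}" using Suc by auto
    then show ?thesis using x0 by simp
  qed
  have L2: "int (k j) = int (k 0) + int j * c + \<Delta> * (\<Sum>t\<in>{1..<j}. xdiff \<xi> t)" for j
    using L2a[of j] sh[of j] by simp
  have L3: "int (k (i*r+j)) = int (k j) + int i * (int (k 0) + p) - \<Delta> * (\<Sum>s<i. int (\<xi> 0 (s * r + j)))" for i
  proof (induction i)
    case 0 then show ?case by simp
  next
    case (Suc i)
    have e: "Suc i * r + j = (i*r+j) + 0 + r" by simp
    show ?case unfolding e rec using Suc sym[of "i*r+j" 0] by (simp add: algebra_simps)
  qed
  have rc: "int r * c = int (k 0) + p - \<Delta> * int (\<xi> 0 0) - \<Delta> * (\<Sum>t\<in>{1..<r}. xdiff \<xi> t)"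
    using L2[of r] rec[of 0 0] by (simp add: algebra_simps)
  have L4: "int r * int (k j) = int (r + j) * int (k 0) + int j * p - \<Delta> * tau \<xi> r j"
  proof -
    have "int r * int (k j) = int r * int (k 0) + int j * (int r * c) + int r * \<Delta> * (\<Sum>t\<in>{1..<j}. xdiff \<xi> t)"
      using L2[of j] by (simp add: algebra_simps)
    also have "\<dots> = int (r + j) * int (k 0) + int j * p - \<Delta> * tau \<xi> r j"
      unfolding rc tau_def by (simp add: algebra_simps)
    finally show ?thesis .
  qed
  have "int r * int (k (i*r+j)) = int r * (int (k j) + int i * (int (k 0) + p) - \<Delta> * (\<Sum>s<i. int (\<xi> 0 (s * r + j))))"
    using L3[of i] by simp
  also have "\<dots> = int r * int (k j) + int r * int i * (int (k 0) + p) - \<Delta> * (int r * (\<Sum>s<i. int (\<xi> 0 (s * r + j))))"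
    by (simp add: algebra_simps)
  finally show ?thesis unfolding L4 by (simp add: algebra_simps)
qed

theorem lemma2p7:
  fixes r :: nat and p \<Delta> :: int
    and \<xi> :: "nat \<Rightarrow> nat \<Rightarrow> nat" and k :: "nat \<Rightarrow> nat"
  assumes "r > 0" and "p > 0" and "\<Delta> > 0"
    and rec: "\<And>s t. int (k (s + t + r)) = int (k s) + int (k t) + p - \<Delta> * int (\<xi> s t)"
  shows "(\<forall>s. \<xi> s 0 = \<xi> 0 s)
    \<and> (\<forall>i j. j < r \<longrightarrow>
          int r * int (k (i * r + j)) =
            int ((i + 1) * r + j) * int (k 0) + int (i * r + j) * p
            - \<Delta> * (tau \<xi> r j + int r * (\<Sum>s<i. int (\<xi> 0 (s * r + j)))))
    \<and> (\<forall>a b c d. b < r \<longrightarrow> d < r \<longrightarrow> b + d < r \<longrightarrow>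
          int (\<xi> (a * r + b) (c * r + d)) =
            (\<Sum>s\<in>{1..<b}. xdiff \<xi> s) + (\<Sum>s\<in>{1..<d}. xdiff \<xi> s)
            - (\<Sum>s\<in>{1..<b + d}. xdiff \<xi> s)
            + (\<Sum>s\<in>{0..a + c}. int (\<xi> 0 (s * r + b + d)))
            - (\<Sum>s<a. int (\<xi> 0 (s * r + b)))
            - (\<Sum>s<c. int (\<xi> 0 (s * r + d))))
    \<and> (\<forall>a b c d. b < r \<longrightarrow> d < r \<longrightarrow> b + d \<ge> r \<longrightarrow>
          int (\<xi> (a * r + b) (c * r + d)) =
            (\<Sum>s\<in>{1..<b}. xdiff \<xi> s) + (\<Sum>s\<in>{1..<d}. xdiff \<xi> s)
            - (\<Sum>s\<in>{1..<b + d - r}. xdiff \<xi> s)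
            + (\<Sum>s\<in>{0..a + c + 1}. int (\<xi> 0 (s * r + b + d - r)))
            - (\<Sum>s<a. int (\<xi> 0 (s * r + b)))
            - (\<Sum>s<c. int (\<xi> 0 (s * r + d)))
            - int (\<xi> 0 0) - (\<Sum>s\<in>{1..<r}. xdiff \<xi> s))"
proof -
  note P = P2[OF assms(1) assms(3) rec]
  have sym: "\<xi> s t = \<xi> t s" for s t
  proof -
    have "\<Delta> * int (\<xi> s t) = \<Delta> * int (\<xi> t s)"
      using rec[of s t] rec[of t s] by (simp add: add.commute)
    thus ?thesis using assms(3) by simp
  qed
  have X: "int r * \<Delta> * int (\<xi> m n) = int r * int (k m) + int r * int (k n) + int r * p - int r * int (k (m+n+r))" for m n
  proof -
    have "\<Delta> * int (\<xi> m n) = int (k m) + int (k n) + p - int (k (m+n+r))" using rec[of m n] by simp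
    hence "int r * (\<Delta> * int (\<xi> m n)) = int r * (int (k m) + int (k n) + p - int (k (m+n+r)))" by simp
    thus ?thesis by (simp add: algebra_simps)
  qed
  have cancel: "x = y" if "int r * \<Delta> * x = int r * \<Delta> * y" for x y :: int
    using that assms(1,3) by simp
  have part3: "int (\<xi> (a * r + b) (c * r + d)) =
            (\<Sum>s\<in>{1..<b}. xdiff \<xi> s) + (\<Sum>s\<in>{1..<d}. xdiff \<xi> s)
            - (\<Sum>s\<in>{1..<b + d}. xdiff \<xi> s)
            + (\<Sum>s\<in>{0..a + c}. int (\<xi> 0 (s * r + b + d)))
            - (\<Sum>s<a. int (\<xi> 0 (s * r + b)))
            - (\<Sum>s<c. int (\<xi> 0 (s * r + d)))" if "b + d < r" for a b c d
  proof (rule cancel)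
    have e: "a * r + b + (c * r + d) + r = (a+c+1) * r + (b+d)" by (simp add: algebra_simps)
    have s: "{0..a + c} = {..<a+c+1}" by auto
    show "int r * \<Delta> * int (\<xi> (a * r + b) (c * r + d)) = int r * \<Delta> * (
            (\<Sum>s\<in>{1..<b}. xdiff \<xi> s) + (\<Sum>s\<in>{1..<d}. xdiff \<xi> s)
            - (\<Sum>s\<in>{1..<b + d}. xdiff \<xi> s)
            + (\<Sum>s\<in>{0..a + c}. int (\<xi> 0 (s * r + b + d)))
            - (\<Sum>s<a. int (\<xi> 0 (s * r + b)))
            - (\<Sum>s<c. int (\<xi> 0 (s * r + d))))"
      unfolding X e P s tau_def by (simp add: algebra_simps add.assoc)
  qed
  have part4: "int (\<xi> (a * r + b) (c * r + d)) =
            (\<Sum>s\<in>{1..<b}. xdiff \<xi> s) + (\<Sum>s\<in>{1..<d}. xdiff \<xi> s)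
            - (\<Sum>s\<in>{1..<b + d - r}. xdiff \<xi> s)
            + (\<Sum>s\<in>{0..a + c + 1}. int (\<xi> 0 (s * r + b + d - r)))
            - (\<Sum>s<a. int (\<xi> 0 (s * r + b)))
            - (\<Sum>s<c. int (\<xi> 0 (s * r + d)))
            - int (\<xi> 0 0) - (\<Sum>s\<in>{1..<r}. xdiff \<xi> s)" if "b + d \<ge> r" for a b c d
  proof (rule cancel)
    have e: "a * r + b + (c * r + d) + r = (a+c+2) * r + (b+d-r)" using that by (simp add: algebra_simps)
    have s: "{0..a + c + 1} = {..<a+c+2}" by auto
    have f: "s * r + b + d - r = s * r + (b + d - r)" for s using that by simp
    have g: "int (b + d - r) = int b + int d - int r" using that by simp
    show "int r * \<Delta> * int (\<xi> (a * r + b) (c * r + d)) = int r * \<Delta> * (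
            (\<Sum>s\<in>{1..<b}. xdiff \<xi> s) + (\<Sum>s\<in>{1..<d}. xdiff \<xi> s)
            - (\<Sum>s\<in>{1..<b + d - r}. xdiff \<xi> s)
            + (\<Sum>s\<in>{0..a + c + 1}. int (\<xi> 0 (s * r + b + d - r)))
            - (\<Sum>s<a. int (\<xi> 0 (s * r + b)))
            - (\<Sum>s<c. int (\<xi> 0 (s * r + d)))
            - int (\<xi> 0 0) - (\<Sum>s\<in>{1..<r}. xdiff \<xi> s))"
      unfolding X e P s f tau_def by (simp add: algebra_simps add.assoc g)
  qed
  show ?thesis using sym P part3 part4 by blast
qed

end
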